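(* (i) $A\vdash_{\mathbf{RJ}}B$ iff $A\vdash B$ is true in all RJ-models. (ii) $A\vdash_{\mathbf{RC}}B$ iff $A\vdash B$ is true in all RC-models. (iii) $A\vdash_{\mathbf{RC\omega}}B$ iff $A\vdash B$ is true in all persistent RC-models.
   Context: Strictly positive formulas: $A::= p\mid \top\mid (A\land B)\mid \alpha A$, $\alpha\le\omega$. $\mathbf{RJ}$: $A\vdash A$; $A\vdash\top$; cut; $A\land B\vdash A$; $A\land B\vdash B$; from $A\vdash B$, $A\vdash C$ infer $A\vdash B\land C$; from $A\vdash B$ infer $\alpha A\vdash\alpha B$; $\alpha\alpha A\vdash\alpha A$; $\alpha\beta A\vdash\beta A$, $\beta\alpha A\vdash\beta A$ for $\alpha\ge\beta$; $\alpha A\land\beta B\vdash\alpha(A\land\beta B)$ for $\alpha>\beta$. $\mathbf{RC}=\mathbf{RJ}+\{\alpha A\vdash\beta A:\alpha>\beta\}$; $\mathbf{RC\omega}=\mathbf{RC}+\{\omega A\vdash A\}$. A Kripke model for signature $S\subseteq\{0,1,\dots,\omega\}$ is a nonempty set $W$ with relations $(R_\alpha)_{\alpha\in S}$ and a valuation of variables; $x\Vdash\top$; $x\Vdash A\land B$ iff both; $x\Vdash\alpha A$ iff $\exists y(xR_\alpha y\wedge y\Vdash A)$. An RJ$_S$-frame satisfies $R_\alpha R_\beta\subseteq R_{\min(\alpha,\beta)}$ (i.e. $xR_\alpha yR_\beta z\Rightarrow xR_{\min(\alpha,\beta)}z$) for all $\alpha,\beta\in S$, and, for $\alpha>\beta$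 in $S$, $xR_\alpha y$ and $xR_\beta z$ imply $yR_\beta z$. An RC$_S$-frame is an RJ$_S$-frame with $R_\alpha\subseteq R_\beta$ for $\beta<\alpha$ in $S$. RJ-/RC-models are those with $S=\{0,1,\dots,\omega\}$. A model is persistent if $x\Vdash p$ and $yR_\omega x$ imply $y\Vdash p$ for each variable $p$. A sequent $A\vdash B$ is true in a model if every node forcing $A$ forces $B$. *)

theory Defs
  imports Main "HOL-Library.Extended_Nat"
begin

text \<open>Modal indices alpha \<le> omega are represented by enat, with \<infinity> standing for omega.
  Propositional variables are natural numbers.\<close>

datatype fm = Var nat | Top | And fm fm | Dia enat fm

inductive prov :: "(fm \<Rightarrow> fm \<Rightarrow> bool) \<Rightarrow> fm \<Rightarrow> fm \<Rightarrow> bool" for Ax where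
  ax: "Ax A B \<Longrightarrow> prov Ax A B"
| refl: "prov Ax A A"
| top: "prov Ax A Top"
| cut: "prov Ax A B \<Longrightarrow> prov Ax B C \<Longrightarrow> prov Ax A C"
| conjE1: "prov Ax (And A B) A"
| conjE2: "prov Ax (And A B) B"
| conjI: "prov Ax A B \<Longrightarrow> prov Ax A C \<Longrightarrow> prov Ax A (And B C)"
| mono: "prov Ax A B \<Longrightarrow> prov Ax (Dia a A) (Dia a B)"
| trans4: "prov Ax (Dia a (Dia a A)) (Dia a A)"
| absorb1: "a \<ge> b \<Longrightarrow> prov Ax (Dia a (Dia b A)) (Dia b A)"
| absorb2: "a \<ge> b \<Longrightarrow> prov Ax (Dia b (Dia a A)) (Dia b A)"
| pull: "a > b \<Longrightarrow> prov Ax (And (Dia a A) (Dia b B)) (Dia a (And A (Dia b B)))"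

definition RJ_ax :: "fm \<Rightarrow> fm \<Rightarrow> bool" where
  "RJ_ax A B \<longleftrightarrow> False"

definition RC_ax :: "fm \<Rightarrow> fm \<Rightarrow> bool" where
  "RC_ax A B \<longleftrightarrow> (\<exists>a b C. a > b \<and> A = Dia a C \<and> B = Dia b C)"

definition RCw_ax :: "fm \<Rightarrow> fm \<Rightarrow> bool" where
  "RCw_ax A B \<longleftrightarrow> RC_ax A B \<or> A = Dia \<infinity> B"

abbreviation RJ_prov where "RJ_prov \<equiv> prov RJ_ax"
abbreviation RC_prov where "RC_prov \<equiv> prov RC_ax"
abbreviation RCw_prov where "RCw_prov \<equiv> prov RCw_ax"

fun sat :: "nat set \<Rightarrow> (enat \<Rightarrow> nat \<Rightarrow> nat \<Rightarrow> bool) \<Rightarrow> (nat \<Rightarrow> nat \<Rightarrow> bool) \<Rightarrow> nat \<Rightarrow> fm \<Rightarrow> bool" where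
  "sat W R V x (Var p) = V p x"
| "sat W R V x Top = True"
| "sat W R V x (And A B) = (sat W R V x A \<and> sat W R V x B)"
| "sat W R V x (Dia a A) = (\<exists>y\<in>W. R a x y \<and> sat W R V y A)"

definition RJ_frame :: "nat set \<Rightarrow> (enat \<Rightarrow> nat \<Rightarrow> nat \<Rightarrow> bool) \<Rightarrow> bool" where
  "RJ_frame W R \<longleftrightarrow> W \<noteq> {} \<and>
     (\<forall>a b. \<forall>x\<in>W. \<forall>y\<in>W. \<forall>z\<in>W. R a x y \<and> R b y z \<longrightarrow> R (min a b) x z) \<and>
     (\<forall>a b. a > b \<longrightarrow> (\<forall>x\<in>W. \<forall>y\<in>W. \<forall>z\<in>W. R a x y \<and> R b x z \<longrightarrow> R b y z))"

definition RC_frame :: "nat set \<Rightarrow> (enat \<Rightarrow> nat \<Rightarrow> nat \<Rightarrow> bool) \<Rightarrow> bool" where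
  "RC_frame W R \<longleftrightarrow> RJ_frame W R \<and>
     (\<forall>a b. b < a \<longrightarrow> (\<forall>x\<in>W. \<forall>y\<in>W. R a x y \<longrightarrow> R b x y))"

definition persistent :: "nat set \<Rightarrow> (enat \<Rightarrow> nat \<Rightarrow> nat \<Rightarrow> bool) \<Rightarrow> (nat \<Rightarrow> nat \<Rightarrow> bool) \<Rightarrow> bool" where
  "persistent W R V \<longleftrightarrow> (\<forall>p. \<forall>x\<in>W. \<forall>y\<in>W. V p x \<and> R \<infinity> y x \<longrightarrow> V p y)"

definition true_in :: "nat set \<Rightarrow> (enat \<Rightarrow> nat \<Rightarrow> nat \<Rightarrow> bool) \<Rightarrow> (nat \<Rightarrow> nat \<Rightarrow> bool) \<Rightarrow> fm \<Rightarrow> fm \<Rightarrow> bool" where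
  "true_in W R V A B \<longleftrightarrow> (\<forall>x\<in>W. sat W R V x A \<longrightarrow> sat W R V x B)"

end

theory Submission
  imports Defs "HOL-Library.Countable"
begin

instance fm :: countable by countable_datatype

section \<open>Soundness\<close>

lemma sound:
  assumes "prov Ax A B" "RJ_frame W R"
    and axv: "\<And>C D. Ax C D \<Longrightarrow> true_in W R V C D"
  shows "true_in W R V A B"
proof -
  have tr: "\<And>a b x y z. x \<in> W \<Longrightarrow> y \<in> W \<Longrightarrow> z \<in> W \<Longrightarrow> R a x y \<Longrightarrow> R b y z \<Longrightarrow> R (min a b) x z"
    using assms(2) unfolding RJ_frame_def by blast
  have pl: "\<And>a b x y z. b < a \<Longrightarrow> x \<in> W \<Longrightarrow> y \<in> W \<Longrightarrow> z \<in> W \<Longrightarrow> R a x y \<Longrightarrow> R b x z \<Longrightarrow> R b y z"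
    using assms(2) unfolding RJ_frame_def by blast
  show ?thesis
  using assms(1)
  proof (induction rule: prov.induct)
    case (ax A B) then show ?case using axv by blast
  next
    case (refl A) then show ?case by (simp add: true_in_def)
  next
    case (top A) then show ?case by (simp add: true_in_def)
  next
    case (cut A B C) then show ?case unfolding true_in_def by blast
  next
    case (conjE1 A B) then show ?case by (simp add: true_in_def)
  next
    case (conjE2 A B) then show ?case by (simp add: true_in_def)
  next
    case (conjI A B C) then show ?case unfolding true_in_def by simp
  next
    case (mono A B a) then show ?case unfolding true_in_def by simp blast
  next
    case (trans4 a A)
    show ?case unfolding true_in_def
    proof (intro ballI impI)
      fix x assume "x \<in> W" "sat W R V x (Dia a (Dia a A))"
      then obtain y z where "y \<in> W" "z \<in> W" "R a x y" "R a y z" "sat W R V z A" by auto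
      then show "sat W R V x (Dia a A)" using tr[of x y z a a] \<open>x \<in> W\<close> by auto
    qed
  next
    case (absorb1 a b A)
    show ?case unfolding true_in_def
    proof (intro ballI impI)
      fix x assume "x \<in> W" "sat W R V x (Dia a (Dia b A))"
      then obtain y z where "y \<in> W" "z \<in> W" "R a x y" "R b y z" "sat W R V z A" by auto
      moreover have "min a b = b" using absorb1 by simp
      ultimately show "sat W R V x (Dia b A)" using tr[of x y z a b] \<open>x \<in> W\<close> by auto
    qed
  next
    case (absorb2 a b A)
    show ?case unfolding true_in_def
    proof (intro ballI impI)
      fix x assume "x \<in> W" "sat W R V x (Dia b (Dia a A))"
      then obtain y z where "y \<in> W" "z \<in> W" "R b x y" "R a y z" "sat W R V z A" by auto
      moreover have "min b a = b" using absorb2 by simp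
      ultimately show "sat W R V x (Dia b A)" using tr[of x y z b a] \<open>x \<in> W\<close> by auto
    qed
  next
    case (pull a b A B)
    show ?case unfolding true_in_def
    proof (intro ballI impI)
      fix x assume "x \<in> W" "sat W R V x (And (Dia a A) (Dia b B))"
      then obtain y z where "y \<in> W" "z \<in> W" "R a x y" "R b x z" "sat W R V y A" "sat W R V z B" by auto
      then have "R b y z" using pl[of b a x y z] pull \<open>x \<in> W\<close> by blast
      then show "sat W R V x (Dia a (And A (Dia b B)))"
        using \<open>y \<in> W\<close> \<open>z \<in> W\<close> \<open>R a x y\<close> \<open>sat W R V y A\<close> \<open>sat W R V z B\<close> by auto
    qed
  qed
qed

lemma RC_valid:
  assumes "RC_frame W R" "RC_ax C D" shows "true_in W R V C D"
proof -
  obtain a b E where h: "b < a" "C = Dia a E" "D = Dia b E" using assms(2) unfolding RC_ax_def by blast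
  have "\<forall>x\<in>W. \<forall>y\<in>W. R a x y \<longrightarrow> R b x y" using assms(1) h(1) unfolding RC_frame_def by blast
  then show ?thesis unfolding true_in_def h by auto
qed

lemma persist_sat:
  assumes "RC_frame W R" "persistent W R V" "x \<in> W" "y \<in> W" "R \<infinity> x y"
    "sat W R V y C"
  shows "sat W R V x C"
  using assms(3-6)
proof (induction C arbitrary: x y)
  case (Var p)
  have "\<forall>p. \<forall>u\<in>W. \<forall>v\<in>W. V p u \<and> R \<infinity> v u \<longrightarrow> V p v"
    using assms(2) unfolding persistent_def .
  then have "V p y \<and> R \<infinity> x y \<longrightarrow> V p x" using Var.prems(1,2) by blast
  then show ?case using Var.prems(3,4) by simp
next
  case (And C1 C2)
  have "sat W R V x C1" using And.IH(1)[of x y] And.prems by simp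
  moreover have "sat W R V x C2" using And.IH(2)[of x y] And.prems by simp
  ultimately show ?case by simp
next
  case (Dia b C)
  then obtain z where z: "z \<in> W" "R b y z" "sat W R V z C" by auto
  have tr: "\<And>a b x y z. x \<in> W \<Longrightarrow> y \<in> W \<Longrightarrow> z \<in> W \<Longrightarrow> R a x y \<Longrightarrow> R b y z \<Longrightarrow> R (min a b) x z"
    using assms(1) unfolding RC_frame_def RJ_frame_def by blast
  have "R (min \<infinity> b) x z" using tr[of x y z \<infinity> b] Dia.prems z by blast
  then show ?case using z by auto
qed simp

lemma RCw_valid:
  assumes "RC_frame W R" "persistent W R V" "RCw_ax C D" shows "true_in W R V C D"
proof (cases "RC_ax C D")
  case True then show ?thesis using assms(1) RC_valid by blast
next
  case False
  then have "C = Dia \<infinity> D" using assms(3) unfolding RCw_ax_def by simp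
  show ?thesis unfolding true_in_def
  proof (intro ballI impI)
    fix x assume x: "x \<in> W" "sat W R V x C"
    then obtain y where "y \<in> W" "R \<infinity> x y" "sat W R V y D" using \<open>C = Dia \<infinity> D\<close> by auto
    then show "sat W R V x D" using persist_sat[OF assms(1,2) x(1)] by blast
  qed
qed

section \<open>Completeness\<close>

fun cj :: "fm list \<Rightarrow> fm" where
  "cj [] = Top"
| "cj (x # L) = And x (cj L)"

definition cl :: "(fm \<Rightarrow> fm \<Rightarrow> bool) \<Rightarrow> fm set \<Rightarrow> fm set" where
  "cl Ax S = {D. \<exists>L. set L \<subseteq> S \<and> prov Ax (cj L) D}"

lemma conj_mem: "x \<in> set L \<Longrightarrow> prov Ax (cj L) x"
proof (induction L)
  case (Cons y L) then show ?case
    by (auto intro: prov.conjE1 prov.cut[OF prov.conjE2])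
qed simp

lemma conj_app1: "prov Ax (cj (L1 @ L2)) (cj L1)"
  by (induction L1) (auto intro: prov.top prov.conjI prov.conjE1 prov.cut[OF prov.conjE2])

lemma conj_app2: "prov Ax (cj (L1 @ L2)) (cj L2)"
  by (induction L1) (auto intro: prov.refl prov.cut[OF prov.conjE2])

lemma cl_sub: "x \<in> S \<Longrightarrow> x \<in> cl Ax S"
  unfolding cl_def by (rule CollectI, rule exI[of _ "[x]"]) (auto intro: prov.conjE1)

lemma cl_prov: "D \<in> cl Ax S \<Longrightarrow> prov Ax D E \<Longrightarrow> E \<in> cl Ax S"
  unfolding cl_def by (auto intro: prov.cut)

lemma cl_and: "D \<in> cl Ax S \<Longrightarrow> E \<in> cl Ax S \<Longrightarrow> And D E \<in> cl Ax S"
proof -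
  assume "D \<in> cl Ax S" "E \<in> cl Ax S"
  then obtain L1 L2 where "set L1 \<subseteq> S" "prov Ax (cj L1) D" "set L2 \<subseteq> S" "prov Ax (cj L2) E"
    unfolding cl_def by auto
  then show ?thesis unfolding cl_def
    by (intro CollectI exI[of _ "L1 @ L2"])
      (auto intro: prov.conjI prov.cut[OF conj_app1] prov.cut[OF conj_app2])
qed

lemma cl_and_iff: "And D E \<in> cl Ax S \<longleftrightarrow> D \<in> cl Ax S \<and> E \<in> cl Ax S"
proof (rule iffI)
  assume h: "And D E \<in> cl Ax S"
  show "D \<in> cl Ax S \<and> E \<in> cl Ax S"
  proof (rule HOL.conjI)
    show "D \<in> cl Ax S" by (rule cl_prov[OF h prov.conjE1])
    show "E \<in> cl Ax S" by (rule cl_prov[OF h prov.conjE2])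
  qed
next
  assume "D \<in> cl Ax S \<and> E \<in> cl Ax S"
  then show "And D E \<in> cl Ax S" using cl_and by simp
qed

lemma cl_top: "Top \<in> cl Ax S"
  unfolding cl_def by (rule CollectI, rule exI[of _ "[]"]) (auto intro: prov.refl)

lemma cl_single: "D \<in> cl Ax {A} \<Longrightarrow> prov Ax A D"
proof -
  assume "D \<in> cl Ax {A}"
  then obtain L where L: "set L \<subseteq> {A}" "prov Ax (cj L) D" unfolding cl_def by auto
  have "prov Ax A (cj L)" using L(1)
    by (induction L) (auto intro: prov.top prov.refl prov.conjI)
  then show ?thesis using L(2) by (rule prov.cut)
qed

fun th :: "(fm \<Rightarrow> fm \<Rightarrow> bool) \<Rightarrow> fm \<Rightarrow> (enat \<times> fm) list \<Rightarrow> fm set" where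
  "th Ax A [] = cl Ax {A}"
| "th Ax A ((a, C) # l) = cl Ax ({C} \<union> {Dia b z | b z. b < a \<and> Dia b z \<in> th Ax A l})"

definition Rel :: "enat \<Rightarrow> fm set \<Rightarrow> fm set \<Rightarrow> bool" where
  "Rel a G D \<longleftrightarrow> (\<forall>E\<in>D. Dia a E \<in> G) \<and> (\<forall>b z. b < a \<and> Dia b z \<in> G \<longrightarrow> Dia b z \<in> D)"

lemma th_cl: "\<exists>S. th Ax A l = cl Ax S"
  by (cases l) auto

lemma th_prov: "D \<in> th Ax A l \<Longrightarrow> prov Ax D E \<Longrightarrow> E \<in> th Ax A l"
  using th_cl cl_prov by metis

lemma th_and: "And D E \<in> th Ax A l \<longleftrightarrow> D \<in> th Ax A l \<and> E \<in> th Ax A l"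
proof -
  obtain S where "th Ax A l = cl Ax S" using th_cl by blast
  then show ?thesis using cl_and_iff by simp
qed

lemma th_top: "Top \<in> th Ax A l"
  using th_cl cl_top by metis

lemma witness_aux:
  assumes "Dia a C \<in> th Ax A l"
    and "set L \<subseteq> {C} \<union> {Dia b z | b z. b < a \<and> Dia b z \<in> th Ax A l}"
  shows "Dia a (And C (cj L)) \<in> th Ax A l"
  using assms(2)
proof (induction L)
  case Nil
  show ?case using assms(1)
    by (rule th_prov) (simp, rule prov.mono, rule prov.conjI, rule prov.refl, rule prov.top)
next
  case (Cons x L)
  then have IH: "Dia a (And C (cj L)) \<in> th Ax A l" by auto
  show ?case
  proof (cases "x = C")
    case True
    then show ?thesis using IH
      by (elim th_prov) (simp, rule prov.mono, rule prov.conjI, rule prov.conjE1, rule prov.refl)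
  next
    case False
    then obtain b z where x: "x = Dia b z" "b < a" "Dia b z \<in> th Ax A l" using Cons by auto
    have "And (Dia a (And C (cj L))) (Dia b z) \<in> th Ax A l" using IH x th_and by blast
    then have "Dia a (And (And C (cj L)) (Dia b z)) \<in> th Ax A l"
      using x(2) prov.pull th_prov by blast
    then show ?thesis using x(1)
      by (elim th_prov) (simp, rule prov.mono, rule prov.conjI, rule prov.cut[OF prov.conjE1 prov.conjE1],
        rule prov.conjI, rule prov.conjE2, rule prov.cut[OF prov.conjE1 prov.conjE2])
  qed
qed

lemma witness:
  assumes "Dia a C \<in> th Ax A l"
  shows "Rel a (th Ax A l) (th Ax A ((a, C) # l)) \<and> C \<in> th Ax A ((a, C) # l)"
proof -
  have "Dia a E \<in> th Ax A l" if "E \<in> th Ax A ((a, C) # l)" for E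
  proof -
    have "E \<in> cl Ax ({C} \<union> {Dia b z | b z. b < a \<and> Dia b z \<in> th Ax A l})"
      using that by simp
    then obtain L where L: "set L \<subseteq> {C} \<union> {Dia b z | b z. b < a \<and> Dia b z \<in> th Ax A l}"
      "prov Ax (cj L) E" unfolding cl_def by blast
    have "Dia a (And C (cj L)) \<in> th Ax A l" using witness_aux[OF assms L(1)] .
    then show ?thesis using L(2)
      by (elim th_prov) (rule prov.mono, rule prov.cut[OF prov.conjE2])
  qed
  then show ?thesis unfolding Rel_def by (auto intro: cl_sub)
qed

definition Rm :: "(fm \<Rightarrow> fm \<Rightarrow> bool) \<Rightarrow> fm \<Rightarrow> enat \<Rightarrow> nat \<Rightarrow> nat \<Rightarrow> bool" where
  "Rm Ax A a x y = Rel a (th Ax A (from_nat x)) (th Ax A (from_nat y))"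

definition Vm :: "(fm \<Rightarrow> fm \<Rightarrow> bool) \<Rightarrow> fm \<Rightarrow> nat \<Rightarrow> nat \<Rightarrow> bool" where
  "Vm Ax A p x = (Var p \<in> th Ax A (from_nat x))"

lemma truth: "sat UNIV (Rm Ax A) (Vm Ax A) x D \<longleftrightarrow> D \<in> th Ax A (from_nat x)"
proof (induction D arbitrary: x)
  case (Var p) then show ?case by (simp add: Vm_def)
next
  case Top then show ?case by (simp add: th_top)
next
  case (And D1 D2) then show ?case by (simp add: th_and)
next
  case (Dia a C)
  show ?case
  proof
    assume "sat UNIV (Rm Ax A) (Vm Ax A) x (Dia a C)"
    then obtain y where "Rm Ax A a x y" "C \<in> th Ax A (from_nat y)" using Dia by auto
    then show "Dia a C \<in> th Ax A (from_nat x)" unfolding Rm_def Rel_def by auto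
  next
    assume h: "Dia a C \<in> th Ax A (from_nat x)"
    let ?y = "to_nat ((a, C) # from_nat x)"
    have "Rm Ax A a x ?y" "C \<in> th Ax A (from_nat ?y)"
      using witness[OF h] unfolding Rm_def by auto
    then show "sat UNIV (Rm Ax A) (Vm Ax A) x (Dia a C)" using Dia by auto
  qed
qed

definition thy :: "(fm \<Rightarrow> fm \<Rightarrow> bool) \<Rightarrow> fm set \<Rightarrow> bool" where
  "thy Ax G \<longleftrightarrow> (\<forall>D E. D \<in> G \<longrightarrow> prov Ax D E \<longrightarrow> E \<in> G)"

lemma th_thy: "thy Ax (th Ax A l)"
  unfolding thy_def using th_prov by blast

lemma min_prov: "prov Ax (Dia a (Dia b E)) (Dia (min a b) E)"
proof (cases "a \<le> b")
  case True
  then have "min a b = a" by simp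
  then show ?thesis using prov.absorb2[OF True, of Ax E] by simp
next
  case False
  then have "b \<le> a" "min a b = b" by auto
  then show ?thesis using prov.absorb1[of b a Ax E] by simp
qed

lemma rel_trans:
  assumes "thy Ax G" "Rel a G D" "Rel b D T" shows "Rel (min a b) G T"
  unfolding Rel_def
proof (intro HOL.conjI ballI allI impI)
  fix E assume "E \<in> T"
  then have "Dia a (Dia b E) \<in> G" using assms(2,3) unfolding Rel_def by auto
  then show "Dia (min a b) E \<in> G" using assms(1) min_prov unfolding thy_def by blast
next
  fix c w assume "c < min a b \<and> Dia c w \<in> G"
  then show "Dia c w \<in> T" using assms(2,3) unfolding Rel_def by auto
qed

lemma rel_pull:
  assumes "thy Ax G" "b < a" "Rel a G D" "Rel b G T" shows "Rel b D T"
  unfolding Rel_def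
proof (intro HOL.conjI ballI allI impI)
  fix E assume "E \<in> T"
  then show "Dia b E \<in> D" using assms(2,3,4) unfolding Rel_def by auto
next
  fix c w assume c: "c < b \<and> Dia c w \<in> D"
  then have "Dia a (Dia c w) \<in> G" using assms(3) unfolding Rel_def by auto
  moreover have "c \<le> a" using c assms(2) by auto
  ultimately have "Dia c w \<in> G" using assms(1) prov.absorb1 unfolding thy_def by blast
  then show "Dia c w \<in> T" using assms(4) c unfolding Rel_def by auto
qed

lemma rel_RC:
  assumes "thy Ax G" "\<And>C D. RC_ax C D \<Longrightarrow> Ax C D" "b < a" "Rel a G D" shows "Rel b G D"
  unfolding Rel_def
proof (intro HOL.conjI ballI allI impI)
  fix E assume "E \<in> D"
  then have "Dia a E \<in> G" using assms(4) unfolding Rel_def by auto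
  moreover have "prov Ax (Dia a E) (Dia b E)"
    using assms(2,3) unfolding RC_ax_def by (blast intro: prov.ax)
  ultimately show "Dia b E \<in> G" using assms(1) unfolding thy_def by blast
next
  fix c w assume "c < b \<and> Dia c w \<in> G"
  then show "Dia c w \<in> D" using assms(3,4) unfolding Rel_def by auto
qed

lemma frame: "RJ_frame UNIV (Rm Ax A)"
  unfolding RJ_frame_def Rm_def using rel_trans[OF th_thy] rel_pull[OF th_thy] by blast

lemma frameRC:
  assumes "\<And>C D. RC_ax C D \<Longrightarrow> Ax C D"
  shows "RC_frame UNIV (Rm Ax A)"
proof -
  have "Rm Ax A b x y" if "b < a" "Rm Ax A a x y" for a b x y
    using rel_RC[OF th_thy[of Ax A "from_nat x"] assms that(1)] that(2) unfolding Rm_def by blast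
  then show ?thesis unfolding RC_frame_def using frame by blast
qed

lemma persistent_m:
  assumes "\<And>C. Ax (Dia \<infinity> C) C"
  shows "persistent UNIV (Rm Ax A) (Vm Ax A)"
  unfolding persistent_def Vm_def Rm_def Rel_def
  using assms th_prov prov.ax by blast

lemma root: "true_in UNIV (Rm Ax A) (Vm Ax A) A B \<Longrightarrow> prov Ax A B"
proof -
  assume h: "true_in UNIV (Rm Ax A) (Vm Ax A) A B"
  let ?x = "to_nat ([] :: (enat \<times> fm) list)"
  have "A \<in> th Ax A (from_nat ?x)" by (simp add: cl_sub)
  then have "B \<in> th Ax A (from_nat ?x)" using h truth unfolding true_in_def by blast
  then show ?thesis by (simp add: cl_single)
qed

theorem theorem4p1:
  shows "(RJ_prov A B \<longleftrightarrow> (\<forall>W R V. RJ_frame W R \<longrightarrow> true_in W R V A B))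
       \<and> (RC_prov A B \<longleftrightarrow> (\<forall>W R V. RC_frame W R \<longrightarrow> true_in W R V A B))
       \<and> (RCw_prov A B \<longleftrightarrow> (\<forall>W R V. RC_frame W R \<and> persistent W R V \<longrightarrow> true_in W R V A B))"
proof -
  have 1: "RJ_prov A B \<longleftrightarrow> (\<forall>W R V. RJ_frame W R \<longrightarrow> true_in W R V A B)"
  proof
    assume "RJ_prov A B"
    then show "\<forall>W R V. RJ_frame W R \<longrightarrow> true_in W R V A B"
      using sound[of RJ_ax A B] by (simp add: RJ_ax_def)
  next
    assume "\<forall>W R V. RJ_frame W R \<longrightarrow> true_in W R V A B"
    then show "RJ_prov A B" using frame root by blast
  qed
  have 2: "RC_prov A B \<longleftrightarrow> (\<forall>W R V. RC_frame W R \<longrightarrow> true_in W R V A B)"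
  proof
    assume "RC_prov A B"
    then show "\<forall>W R V. RC_frame W R \<longrightarrow> true_in W R V A B"
      using sound[of RC_ax A B] RC_valid unfolding RC_frame_def by blast
  next
    assume "\<forall>W R V. RC_frame W R \<longrightarrow> true_in W R V A B"
    moreover have "RC_frame UNIV (Rm RC_ax A)" by (rule frameRC)
    ultimately show "RC_prov A B" using root by blast
  qed
  have 3: "RCw_prov A B \<longleftrightarrow> (\<forall>W R V. RC_frame W R \<and> persistent W R V \<longrightarrow> true_in W R V A B)"
  proof
    assume "RCw_prov A B"
    then show "\<forall>W R V. RC_frame W R \<and> persistent W R V \<longrightarrow> true_in W R V A B"
      using sound[of RCw_ax A B] RCw_valid unfolding RC_frame_def by blast
  next
    assume "\<forall>W R V. RC_frame W R \<and> persistent W R V \<longrightarrow> true_in W R V A B"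
    moreover have "RC_frame UNIV (Rm RCw_ax A)" by (rule frameRC) (simp add: RCw_ax_def)
    moreover have "persistent UNIV (Rm RCw_ax A) (Vm RCw_ax A)"
      by (rule persistent_m) (simp add: RCw_ax_def)
    ultimately show "RCw_prov A B" using root by blast
  qed
  show ?thesis using 1 2 3 by blast
qed

end
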